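(* Let $\Gamma\subseteq\mathbb R^n$ be an open convex set, $S\subseteq\Gamma$ a nonempty convex set, and $f:\Gamma\to\mathbb R$ a Fréchet differentiable function that is quasiconvex on $\Gamma$. Let $\bar S=\arg\min\{f(x)\mid x\in S\}$. If the set $\{x\in\bar S\mid \nabla f(x)\neq 0\}$ is nonempty, then the normalized gradient $\nabla f(x)/\|\nabla f(x)\|$ is constant on this set; i.e., for all $x,y\in\bar S$ with $\nabla f(x)\ne0$, $\nabla f(y)\ne 0$ one has $\nabla f(x)/\|\nabla f(x)\|=\nabla f(y)/\|\nabla f(y)\|$.
   Context: A function $f:\Gamma\to\mathbb R$ on a convex set $\Gamma\subseteq\mathbb R^n$ is quasiconvex on $\Gamma$ iff $f(x+t(y-x))\le\max\{f(x),f(y)\}$ for all $x,y\in\Gamma$ and $t\in[0,1]$. $\|\cdot\|$ is the Euclidean norm. *)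

theory Defs
  imports "HOL-Analysis.Analysis"
begin

definition quasiconvex_on :: "'a::real_vector set \<Rightarrow> ('a \<Rightarrow> real) \<Rightarrow> bool" where
  "quasiconvex_on \<Gamma> f \<longleftrightarrow>
     (\<forall>x\<in>\<Gamma>. \<forall>y\<in>\<Gamma>. \<forall>t::real. 0 \<le> t \<and> t \<le> 1 \<longrightarrow> f (x + t *\<^sub>R (y - x)) \<le> max (f x) (f y))"

definition argmin_on :: "('a \<Rightarrow> real) \<Rightarrow> 'a set \<Rightarrow> 'a set" where
  "argmin_on f S = {x \<in> S. \<forall>y\<in>S. f x \<le> f y}"

end

theory Submission
  imports Defs
begin

lemma dir_deriv:
  fixes f :: "real ^ 'n \<Rightarrow> real"
  assumes "(f has_derivative (\<lambda>h. a \<bullet> h)) (at x)"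
  shows "((\<lambda>t. f (x + t *\<^sub>R v)) has_real_derivative (a \<bullet> v)) (at 0)"
proof -
  have 1: "((\<lambda>t::real. x + t *\<^sub>R v) has_derivative (\<lambda>t. t *\<^sub>R v)) (at 0)"
    by (auto intro!: derivative_eq_intros)
  have 2: "(f has_derivative (\<lambda>h. a \<bullet> h)) (at ((\<lambda>t::real. x + t *\<^sub>R v) 0))"
    using assms by simp
  have "((\<lambda>t. f (x + t *\<^sub>R v)) has_derivative (\<lambda>t. a \<bullet> (t *\<^sub>R v))) (at 0)"
    using has_derivative_compose[OF 1 2] by simp
  moreover have "(\<lambda>t. a \<bullet> (t *\<^sub>R v)) = (*) (a \<bullet> v)"
    by (auto simp: inner_scaleR_right)
  ultimately show ?thesis unfolding has_field_derivative_def by simp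
qed

lemma open_dir:
  fixes x v :: "'a::real_normed_vector"
  assumes "open G" "x \<in> G"
  shows "\<exists>d>0. \<forall>h. 0 < h \<and> h < d \<longrightarrow> x + h *\<^sub>R v \<in> G"
proof -
  obtain e where e: "e > 0" "ball x e \<subseteq> G" using assms open_contains_ball by blast
  define d where "d = e / (norm v + 1)"
  have d: "d > 0" using e by (simp add: d_def add_nonneg_pos divide_pos_pos)
  have "x + h *\<^sub>R v \<in> G" if "0 < h" "h < d" for h
  proof -
    have "norm (h *\<^sub>R v) = h * norm v" using that by simp
    also have "\<dots> \<le> h * (norm v + 1)" using that by (simp add: mult_left_mono)
    also have "\<dots> < d * (norm v + 1)" using that by (intro mult_strict_right_mono) (auto simp: add_nonneg_pos)
    also have "\<dots> = e" proof - have "norm v + 1 > 0" using norm_ge_zero[of v] by linarith thus ?thesis by (simp add: d_def) qed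
    finally have "dist x (x + h *\<^sub>R v) < e" by (simp add: dist_norm)
    thus ?thesis using e by auto
  qed
  thus ?thesis using d by blast
qed

lemma grad_ineq:
  fixes f :: "real ^ 'n \<Rightarrow> real"
  assumes "open \<Gamma>" "quasiconvex_on \<Gamma> f" "x \<in> \<Gamma>" "z \<in> \<Gamma>" "f z \<le> f x"
    and "(f has_derivative (\<lambda>h. a \<bullet> h)) (at x)"
  shows "a \<bullet> (z - x) \<le> 0"
proof (rule ccontr)
  assume "\<not> ?thesis"
  hence pos: "0 < a \<bullet> (z - x)" by simp
  from DERIV_pos_inc_right[OF dir_deriv[OF assms(6), of "z - x"] pos]
  obtain d where d: "d > 0" "\<forall>h>0. h < d \<longrightarrow> f (x + 0 *\<^sub>R (z-x)) < f (x + (0 + h) *\<^sub>R (z - x))"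
    by blast
  define h where "h = min (d/2) 1"
  have h: "0 < h" "h < d" "h \<le> 1" using d by (auto simp: h_def)
  have "f x < f (x + h *\<^sub>R (z - x))" using d h by auto
  moreover have "f (x + h *\<^sub>R (z - x)) \<le> max (f x) (f z)"
    using assms(2,3,4) h unfolding quasiconvex_on_def by auto
  ultimately show False using assms(5) by simp
qed

lemma grad_strict:
  fixes f :: "real ^ 'n \<Rightarrow> real"
  assumes "open \<Gamma>" "quasiconvex_on \<Gamma> f" "x \<in> \<Gamma>" "z \<in> \<Gamma>" "f z < f x"
    and der: "\<And>x. x \<in> \<Gamma> \<Longrightarrow> (f has_derivative (\<lambda>h. grad x \<bullet> h)) (at x)"
    and "grad x \<noteq> 0"
  shows "grad x \<bullet> (z - x) < 0"
proof (rule ccontr)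
  assume "\<not> ?thesis"
  hence nn: "0 \<le> grad x \<bullet> (z - x)" by simp
  let ?a = "grad x"
  let ?g = "\<lambda>t. f (z + t *\<^sub>R ?a)"
  have "isCont ?g 0" using DERIV_isCont[OF dir_deriv[OF der[OF assms(4)], of ?a]] .
  hence "(?g \<longlongrightarrow> ?g 0) (at 0)" by (simp add: isCont_def)
  moreover have "?g 0 < f x" using assms(5) by simp
  ultimately have "eventually (\<lambda>t. ?g t < f x) (at 0)" by (rule order_tendstoD(2))
  then obtain d1 where d1: "d1 > 0" "\<forall>t. t \<noteq> 0 \<and> dist t 0 < d1 \<longrightarrow> ?g t < f x"
    unfolding eventually_at by auto
  obtain d2 where d2: "d2 > 0" "\<forall>h. 0 < h \<and> h < d2 \<longrightarrow> z + h *\<^sub>R ?a \<in> \<Gamma>"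
    using open_dir[OF assms(1,4)] by blast
  define h where "h = min d1 d2 / 2"
  have h: "0 < h" "h < d1" "h < d2" using d1 d2 by (auto simp: h_def)
  have zin: "z + h *\<^sub>R ?a \<in> \<Gamma>" using d2 h by auto
  have lt: "f (z + h *\<^sub>R ?a) < f x" using d1 h by auto
  have "?a \<bullet> (z + h *\<^sub>R ?a - x) \<le> 0"
    using grad_ineq[OF assms(1,2,3) zin _ der[OF assms(3)]] lt by simp
  moreover have "?a \<bullet> (z + h *\<^sub>R ?a - x) = ?a \<bullet> (z - x) + h * (?a \<bullet> ?a)"
    by (simp add: inner_diff_right inner_add_right algebra_simps)
  moreover have "?a \<bullet> ?a > 0" using assms(7) by simp
  ultimately show False using nn h by (smt (verit) mult_pos_pos)
qed

theorem lemma5: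
  fixes \<Gamma> S :: "(real ^ 'n) set"
    and f :: "real ^ 'n \<Rightarrow> real"
    and grad :: "real ^ 'n \<Rightarrow> real ^ 'n"
  assumes "open \<Gamma>" and "convex \<Gamma>"
    and "S \<subseteq> \<Gamma>" and "S \<noteq> {}" and "convex S"
    and "\<And>x. x \<in> \<Gamma> \<Longrightarrow> (f has_derivative (\<lambda>h. grad x \<bullet> h)) (at x)"
    and "quasiconvex_on \<Gamma> f"
    and "x \<in> argmin_on f S" and "y \<in> argmin_on f S"
    and "grad x \<noteq> 0" and "grad y \<noteq> 0"
  shows "grad x /\<^sub>R norm (grad x) = grad y /\<^sub>R norm (grad y)"
proof -
  let ?a = "grad x" and ?b = "grad y"
  have xS: "x \<in> S" and yS: "y \<in> S" using assms(8,9) by (auto simp: argmin_on_def)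
  have xG: "x \<in> \<Gamma>" and yG: "y \<in> \<Gamma>" using xS yS assms(3) by auto
  have eq: "f x = f y" using assms(8,9) by (auto simp: argmin_on_def intro: antisym)
  have min: "\<And>z. z \<in> S \<Longrightarrow> f y \<le> f z" using assms(9) by (auto simp: argmin_on_def)
  have A1: "?b \<bullet> (x - y) \<le> 0"
    using grad_ineq[OF assms(1,7) yG xG _ assms(6)[OF yG]] eq by simp
  have A2: "?b \<bullet> (x - y) \<ge> 0"
  proof (rule ccontr)
    assume "\<not> ?thesis"
    hence neg: "?b \<bullet> (x - y) < 0" by simp
    from DERIV_neg_dec_right[OF dir_deriv[OF assms(6)[OF yG], of "x - y"] neg]
    obtain d where d: "d > 0" "\<forall>h>0. h < d \<longrightarrow> f (y + (0 + h) *\<^sub>R (x - y)) < f (y + 0 *\<^sub>R (x-y))"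
      by blast
    define h where "h = min (d/2) 1"
    have h: "0 < h" "h < d" "h \<le> 1" using d by (auto simp: h_def)
    have "f (y + h *\<^sub>R (x - y)) < f y" using d h by auto
    moreover have "y + h *\<^sub>R (x - y) \<in> S"
    proof -
      have "y + h *\<^sub>R (x - y) = (1 - h) *\<^sub>R y + h *\<^sub>R x" by (simp add: algebra_simps)
      thus ?thesis using assms(5) xS yS h by (simp add: convex_def)
    qed
    ultimately show False using min by fastforce
  qed
  have A: "?b \<bullet> (x - y) = 0" using A1 A2 by simp
  have B: "?b \<bullet> d < 0" if ad: "?a \<bullet> d < 0" for d
  proof -
    from DERIV_neg_dec_right[OF dir_deriv[OF assms(6)[OF xG], of d] ad]
    obtain d1 where d1: "d1 > 0" "\<forall>h>0. h < d1 \<longrightarrow> f (x + (0 + h) *\<^sub>R d) < f (x + 0 *\<^sub>R d)"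
      by blast
    obtain d2 where d2: "d2 > 0" "\<forall>h. 0 < h \<and> h < d2 \<longrightarrow> x + h *\<^sub>R d \<in> \<Gamma>"
      using open_dir[OF assms(1) xG] by blast
    define h where "h = min d1 d2 / 2"
    have h: "0 < h" "h < d1" "h < d2" using d1 d2 by (auto simp: h_def)
    have zin: "x + h *\<^sub>R d \<in> \<Gamma>" using d2 h by auto
    have lt: "f (x + h *\<^sub>R d) < f y" using d1 h eq by auto
    have "?b \<bullet> (x + h *\<^sub>R d - y) < 0"
      using grad_strict[OF assms(1,7) yG zin lt assms(6) assms(11)] .
    moreover have "?b \<bullet> (x + h *\<^sub>R d - y) = ?b \<bullet> (x - y) + h * (?b \<bullet> d)"
      by (simp add: inner_diff_right inner_add_right algebra_simps)
    ultimately have "h * (?b \<bullet> d) < 0" using A by simp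
    thus ?thesis using h by (simp add: mult_less_0_iff)
  qed
  have aa: "?a \<bullet> ?a > 0" using assms(10) by simp
  have ba: "?b \<bullet> ?a > 0" using B[of "- ?a"] aa by simp
  define l where "l = (?b \<bullet> ?a) / (?a \<bullet> ?a)"
  have l: "l > 0" using aa ba by (simp add: l_def)
  define w where "w = ?b - l *\<^sub>R ?a"
  have wa: "w \<bullet> ?a = 0" using aa by (simp add: w_def l_def inner_diff_left)
  have w0: "w = 0"
  proof (rule ccontr)
    assume "w \<noteq> 0"
    hence ww: "w \<bullet> w > 0" by simp
    define e where "e = (w \<bullet> w) / (2 * (?b \<bullet> ?a))"
    have e: "e > 0" using ww ba by (simp add: e_def)
    define d where "d = w - e *\<^sub>R ?a"
    have "?a \<bullet> d = - e * (?a \<bullet> ?a)" using wa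
      by (simp add: d_def inner_diff_right inner_commute)
    hence "?a \<bullet> d < 0" using e aa by (simp add: mult_pos_pos)
    hence "?b \<bullet> d < 0" by (rule B)
    moreover have "?b \<bullet> w = w \<bullet> w"
    proof -
      have "?b = w + l *\<^sub>R ?a" by (simp add: w_def)
      hence "?b \<bullet> w = w \<bullet> w + l * (?a \<bullet> w)" by (metis inner_add_left inner_scaleR_left)
      thus ?thesis using wa by (simp add: inner_commute)
    qed
    moreover have "?b \<bullet> d = ?b \<bullet> w - e * (?b \<bullet> ?a)"
      by (simp add: d_def inner_diff_right)
    moreover have "e * (?b \<bullet> ?a) = (w \<bullet> w) / 2" using ba by (simp add: e_def)
    ultimately show False using ww by simp
  qed
  hence bl: "?b = l *\<^sub>R ?a" by (simp add: w_def)
  have "norm ?b = l * norm ?a" using l bl by simp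
  thus ?thesis using bl l by simp
qed

end
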